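(* For every prime power $k$, the graph $G_k$ satisfies $c(G_k) = k$, $c_{V,\mathrm{r}}(G_k) \leq k+1$ and $c_E(G_k) \geq k(k-1)$.
   Context: A Latin square of order $k$ is a partition $L = L(1) \cup \dots \cup L(k)$ of $A = [k]\times[k]$ such that each row $A[i,\cdot] = \{(i,j) : j \in [k]\}$ and each column meets each part $L(n)$ in exactly one position. Two Latin squares $L_1, L_2$ of order $k$ are orthogonal if $|L_1(n_1)\cap L_2(n_2)| = 1$ for all $n_1,n_2\in[k]$. For a prime power $k$, fix $k-1$ mutually orthogonal Latin squares $L_1,\dots,L_{k-1}$ of order $k$. Let $R = \{A[i,\cdot] : i \in [k]\}$ and $\mathcal{L} = \{L_s(n) : s \in [k-1], n \in [k]\}$. The graph $G_k$ has vertex set $A \cup R \cup \mathcal{L}$ and an edge between $p \in A$ and $S \in R \cup \mathcal{L}$ whenever $p \in S$; no other edges. Games: players alternate turns, cops first; initially the cop player places all cops, then the robber is placed on a vertex (several pieces may share a position). In a turn each piece of the moving player may stay or make one move (no obligation to move). The robber sits on vertices and moves to adjacent vertices; $v_r$ is his current vertex. Classical version: cops on vertices moving to adjacent vertices; cops win if a cop is on $v_r$; $c(G)$ is the least number of cops forcing a win in finitely many turns. Restrictive vertex version: cops on vertices; cops win when every neighbor of $v_r$ is occupied by a cop; after each robber turn (including initial placement) no cop may be on $v_r$, in particular the robber may not move onto a cop-occupied vertex, and if a cop moves onto $v_r$ the robber must leave in his next turn; number $c_{V,\mathrm{r}}(G)$. Edge version: cops sit on edges; a cop on edge $e$ may move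 to any edge sharing an endpoint with $e$; cops win when every edge incident to $v_r$ is occupied by a cop; number $c_E(G)$. *)

theory Defs
  imports "HOL-Computational_Algebra.Primes"
begin

definition cells :: "nat \<Rightarrow> (nat \<times> nat) set" where
  "cells k = {1..k} \<times> {1..k}"

definition row :: "nat \<Rightarrow> nat \<Rightarrow> (nat \<times> nat) set" where
  "row k i = {(i, j) | j. j \<in> {1..k}}"

definition col :: "nat \<Rightarrow> nat \<Rightarrow> (nat \<times> nat) set" where
  "col k j = {(i, j) | i. i \<in> {1..k}}"

definition latin_square :: "nat \<Rightarrow> (nat \<Rightarrow> (nat \<times> nat) set) \<Rightarrow> bool" where
  "latin_square k L \<longleftrightarrow>
     (\<Union>n\<in>{1..k}. L n) = cells k \<and>
     (\<forall>n\<in>{1..k}. L n \<subseteq> cells k) \<and>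
     (\<forall>n\<in>{1..k}. \<forall>n'\<in>{1..k}. n \<noteq> n' \<longrightarrow> L n \<inter> L n' = {}) \<and>
     (\<forall>i\<in>{1..k}. \<forall>n\<in>{1..k}. card (row k i \<inter> L n) = 1) \<and>
     (\<forall>j\<in>{1..k}. \<forall>n\<in>{1..k}. card (col k j \<inter> L n) = 1)"

definition orthogonal :: "nat \<Rightarrow> (nat \<Rightarrow> (nat \<times> nat) set) \<Rightarrow> (nat \<Rightarrow> (nat \<times> nat) set) \<Rightarrow> bool" where
  "orthogonal k L1 L2 \<longleftrightarrow> (\<forall>n1\<in>{1..k}. \<forall>n2\<in>{1..k}. card (L1 n1 \<inter> L2 n2) = 1)"

definition MOLS :: "nat \<Rightarrow> (nat \<Rightarrow> nat \<Rightarrow> (nat \<times> nat) set) \<Rightarrow> bool" where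
  "MOLS k Ls \<longleftrightarrow>
     (\<forall>s\<in>{1..k-1}. latin_square k (Ls s)) \<and>
     (\<forall>s\<in>{1..k-1}. \<forall>t\<in>{1..k-1}. s \<noteq> t \<longrightarrow> orthogonal k (Ls s) (Ls t))"

text \<open>Vertices: cells of A (tagged Cell) and the sets in R \<union> \<L> (tagged Blk).\<close>
datatype gvert = Cell "nat \<times> nat" | Blk "(nat \<times> nat) set"

definition rows_set :: "nat \<Rightarrow> (nat \<times> nat) set set" where
  "rows_set k = {row k i | i. i \<in> {1..k}}"

definition parts_set :: "nat \<Rightarrow> (nat \<Rightarrow> nat \<Rightarrow> (nat \<times> nat) set) \<Rightarrow> (nat \<times> nat) set set" where
  "parts_set k Ls = {Ls s n | s n. s \<in> {1..k-1} \<and> n \<in> {1..k}}"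

definition Gk_V :: "nat \<Rightarrow> (nat \<Rightarrow> nat \<Rightarrow> (nat \<times> nat) set) \<Rightarrow> gvert set" where
  "Gk_V k Ls = Cell ` cells k \<union> Blk ` (rows_set k \<union> parts_set k Ls)"

definition Gk_adj :: "nat \<Rightarrow> (nat \<Rightarrow> nat \<Rightarrow> (nat \<times> nat) set) \<Rightarrow> gvert \<Rightarrow> gvert \<Rightarrow> bool" where
  "Gk_adj k Ls u v \<longleftrightarrow> u \<in> Gk_V k Ls \<and> v \<in> Gk_V k Ls \<and>
     ((\<exists>p S. u = Cell p \<and> v = Blk S \<and> p \<in> S) \<or> (\<exists>p S. u = Blk S \<and> v = Cell p \<and> p \<in> S))"

text \<open>A configuration of m cops is a function C; only the values C i for i < m matter.\<close>
definition occ :: "nat \<Rightarrow> (nat \<Rightarrow> 'a) \<Rightarrow> 'a set" where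
  "occ m C = C ` {..<m}"

definition vstep :: "('v \<Rightarrow> 'v \<Rightarrow> bool) \<Rightarrow> nat \<Rightarrow> (nat \<Rightarrow> 'v) \<Rightarrow> (nat \<Rightarrow> 'v) \<Rightarrow> bool" where
  "vstep adj m C C' \<longleftrightarrow> (\<forall>i<m. C' i = C i \<or> adj (C i) (C' i))"

text \<open>Classical version. cl_win adj m C r: cops at C, robber at r, cops to move;
  the cops can force a win in finitely many turns.\<close>
inductive cl_win :: "('v \<Rightarrow> 'v \<Rightarrow> bool) \<Rightarrow> nat \<Rightarrow> (nat \<Rightarrow> 'v) \<Rightarrow> 'v \<Rightarrow> bool"
  for adj m where
  caught: "r \<in> occ m C \<Longrightarrow> cl_win adj m C r"
| catch: "vstep adj m C C' \<Longrightarrow> r \<in> occ m C' \<Longrightarrow> cl_win adj m C r"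
| move: "vstep adj m C C' \<Longrightarrow> (\<forall>r'. (r' = r \<or> adj r r') \<longrightarrow> cl_win adj m C' r') \<Longrightarrow> cl_win adj m C r"

definition cop_number :: "'v set \<Rightarrow> ('v \<Rightarrow> 'v \<Rightarrow> bool) \<Rightarrow> nat" where
  "cop_number V adj = (LEAST m. \<exists>C. (\<forall>i<m. C i \<in> V) \<and> (\<forall>r\<in>V. cl_win adj m C r))"

text \<open>Restrictive vertex version: cops win when all neighbours of the robber are occupied;
  the robber may never end his turn (or his placement) on a cop-occupied vertex.\<close>
inductive rv_win :: "('v \<Rightarrow> 'v \<Rightarrow> bool) \<Rightarrow> nat \<Rightarrow> (nat \<Rightarrow> 'v) \<Rightarrow> 'v \<Rightarrow> bool"
  for adj m where
  surrounded: "{v. adj r v} \<subseteq> occ m C \<Longrightarrow> rv_win adj m C r"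
| surround: "vstep adj m C C' \<Longrightarrow> {v. adj r v} \<subseteq> occ m C' \<Longrightarrow> rv_win adj m C r"
| move: "vstep adj m C C' \<Longrightarrow>
           (\<forall>r'. (r' = r \<or> adj r r') \<and> r' \<notin> occ m C' \<longrightarrow> rv_win adj m C' r') \<Longrightarrow>
           rv_win adj m C r"

definition rv_cop_number :: "'v set \<Rightarrow> ('v \<Rightarrow> 'v \<Rightarrow> bool) \<Rightarrow> nat" where
  "rv_cop_number V adj =
     (LEAST m. \<exists>C. (\<forall>i<m. C i \<in> V) \<and> (\<forall>r\<in>V. r \<notin> occ m C \<longrightarrow> rv_win adj m C r))"

text \<open>Edge version: cops sit on edges (unordered pairs {u,v} with adj u v).\<close>
definition edges :: "('v \<Rightarrow> 'v \<Rightarrow> bool) \<Rightarrow> 'v set set" where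
  "edges adj = {{u, v} | u v. adj u v}"

definition estep :: "('v \<Rightarrow> 'v \<Rightarrow> bool) \<Rightarrow> nat \<Rightarrow> (nat \<Rightarrow> 'v set) \<Rightarrow> (nat \<Rightarrow> 'v set) \<Rightarrow> bool" where
  "estep adj m C C' \<longleftrightarrow> (\<forall>i<m. C' i = C i \<or> (C' i \<in> edges adj \<and> C i \<inter> C' i \<noteq> {}))"

definition incident :: "('v \<Rightarrow> 'v \<Rightarrow> bool) \<Rightarrow> 'v \<Rightarrow> 'v set set" where
  "incident adj r = {e \<in> edges adj. r \<in> e}"

inductive ed_win :: "('v \<Rightarrow> 'v \<Rightarrow> bool) \<Rightarrow> nat \<Rightarrow> (nat \<Rightarrow> 'v set) \<Rightarrow> 'v \<Rightarrow> bool"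
  for adj m where
  surrounded: "incident adj r \<subseteq> occ m C \<Longrightarrow> ed_win adj m C r"
| surround: "estep adj m C C' \<Longrightarrow> incident adj r \<subseteq> occ m C' \<Longrightarrow> ed_win adj m C r"
| move: "estep adj m C C' \<Longrightarrow> (\<forall>r'. (r' = r \<or> adj r r') \<longrightarrow> ed_win adj m C' r') \<Longrightarrow>
           ed_win adj m C r"

definition edge_cop_number :: "'v set \<Rightarrow> ('v \<Rightarrow> 'v \<Rightarrow> bool) \<Rightarrow> nat" where
  "edge_cop_number V adj =
     (LEAST m. \<exists>C. (\<forall>i<m. C i \<in> edges adj) \<and> (\<forall>r\<in>V. ed_win adj m C r))"

end

theory Submission
  imports Defs
begin


locale gk =
  fixes k :: nat and Ls :: "nat \<Rightarrow> nat \<Rightarrow> (nat \<times> nat) set"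
  assumes M: "MOLS k Ls" and k2: "2 \<le> k"
begin

abbreviation "V \<equiv> Gk_V k Ls"
abbreviation "adj \<equiv> Gk_adj k Ls"

definition line :: "(nat \<times> nat) set \<Rightarrow> bool" where
  "line S \<longleftrightarrow> S \<in> rows_set k \<union> parts_set k Ls"

lemma latin: "s \<in> {1..k-1} \<Longrightarrow> latin_square k (Ls s)"
  using M unfolding MOLS_def by blast

lemma orth: "s \<in> {1..k-1} \<Longrightarrow> t \<in> {1..k-1} \<Longrightarrow> s \<noteq> t \<Longrightarrow> orthogonal k (Ls s) (Ls t)"
  using M unfolding MOLS_def by blast

lemma latin_parts:
  assumes s: "s \<in> {1..k-1}"
  shows "(\<Union>n\<in>{1..k}. Ls s n) = cells k \<and>
     (\<forall>n\<in>{1..k}. Ls s n \<subseteq> cells k) \<and>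
     (\<forall>n\<in>{1..k}. \<forall>n'\<in>{1..k}. n \<noteq> n' \<longrightarrow> Ls s n \<inter> Ls s n' = {}) \<and>
     (\<forall>i\<in>{1..k}. \<forall>n\<in>{1..k}. card (row k i \<inter> Ls s n) = 1) \<and>
     (\<forall>j\<in>{1..k}. \<forall>n\<in>{1..k}. card (col k j \<inter> Ls s n) = 1)"
  using latin[OF s] unfolding latin_square_def .

lemma part_sub: "s \<in> {1..k-1} \<Longrightarrow> n \<in> {1..k} \<Longrightarrow> Ls s n \<subseteq> cells k"
  using latin_parts by blast

lemma part_cover: "s \<in> {1..k-1} \<Longrightarrow> p \<in> cells k \<Longrightarrow> \<exists>n\<in>{1..k}. p \<in> Ls s n"
  using latin_parts[of s] by blast

lemma part_disj: "s \<in> {1..k-1} \<Longrightarrow> n \<in> {1..k} \<Longrightarrow> n' \<in> {1..k} \<Longrightarrow> n \<noteq> n' \<Longrightarrow> Ls s n \<inter> Ls s n' = {}"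
  using latin_parts by blast

lemma latin_rowc: "s \<in> {1..k-1} \<Longrightarrow> i \<in> {1..k} \<Longrightarrow> n \<in> {1..k} \<Longrightarrow> card (row k i \<inter> Ls s n) = 1"
  using latin_parts by blast

lemma latin_colc: "s \<in> {1..k-1} \<Longrightarrow> j \<in> {1..k} \<Longrightarrow> n \<in> {1..k} \<Longrightarrow> card (col k j \<inter> Ls s n) = 1"
  using latin_parts by blast

lemma orthc: "s \<in> {1..k-1} \<Longrightarrow> t \<in> {1..k-1} \<Longrightarrow> s \<noteq> t \<Longrightarrow> n \<in> {1..k} \<Longrightarrow> n' \<in> {1..k} \<Longrightarrow> card (Ls s n \<inter> Ls t n') = 1"
  using orth unfolding orthogonal_def by blast

lemma mem_col: "q \<in> col k j \<longleftrightarrow> snd q = j \<and> fst q \<in> {1..k}"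
  by (cases q) (auto simp: col_def)
lemma mem_row: "q \<in> row k i \<longleftrightarrow> fst q = i \<and> snd q \<in> {1..k}"
  by (cases q) (auto simp: row_def)
lemma mem_cells: "q \<in> cells k \<longleftrightarrow> fst q \<in> {1..k} \<and> snd q \<in> {1..k}"
  by (cases q) (auto simp: cells_def)

lemma card1_uniq: "card A = 1 \<Longrightarrow> a \<in> A \<Longrightarrow> b \<in> A \<Longrightarrow> a = b"
  by (metis card_1_singletonE singletonD)

lemma card1_ex: "card A = 1 \<Longrightarrow> \<exists>a. a \<in> A"
  by (metis card_1_singletonE singletonI)

lemma part_col:
  assumes s: "s \<in> {1..k-1}" and n: "n \<in> {1..k}" and j: "j \<in> {1..k}"
  shows "\<exists>q\<in>Ls s n. snd q = j"
proof -
  have "card (col k j \<inter> Ls s n) = 1" using latin_colc[OF s j n] .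
  then obtain a where "a \<in> col k j \<inter> Ls s n" using card1_ex by blast
  then have "a \<in> Ls s n" "snd a = j" unfolding col_def by auto
  then show ?thesis by blast
qed

lemma part_col_uniq:
  assumes s: "s \<in> {1..k-1}" and n: "n \<in> {1..k}" and q: "q \<in> Ls s n" "q' \<in> Ls s n"
    and e: "snd q = snd q'"
  shows "q = q'"
proof -
  have qc: "q \<in> cells k" "q' \<in> cells k" using part_sub[OF s n] q by auto
  then have j: "snd q \<in> {1..k}" "fst q' \<in> {1..k}" by (simp_all add: mem_cells)
  have "card (col k (snd q) \<inter> Ls s n) = 1" using latin_colc[OF s j(1) n] .
  moreover have "q \<in> col k (snd q)" using qc j e by (simp add: mem_col mem_cells)
  moreover have "q' \<in> col k (snd q)" using qc j e by (simp add: mem_col mem_cells)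
  ultimately show ?thesis using card1_uniq[of "_ \<inter> Ls s n" q q'] q by blast
qed

lemma part_row:
  assumes s: "s \<in> {1..k-1}" and n: "n \<in> {1..k}" and i: "i \<in> {1..k}"
  shows "\<exists>q\<in>Ls s n. fst q = i"
proof -
  have "card (row k i \<inter> Ls s n) = 1" using latin_rowc[OF s i n] .
  then obtain a where "a \<in> row k i \<inter> Ls s n" using card1_ex by blast
  then have "a \<in> Ls s n" "fst a = i" unfolding row_def by auto
  then show ?thesis by blast
qed

lemma part_row_uniq:
  assumes s: "s \<in> {1..k-1}" and n: "n \<in> {1..k}" and q: "q \<in> Ls s n" "q' \<in> Ls s n"
    and e: "fst q = fst q'"
  shows "q = q'"
proof -
  have qc: "q \<in> cells k" "q' \<in> cells k" using part_sub[OF s n] q by auto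
  then have j: "fst q \<in> {1..k}" "snd q' \<in> {1..k}" by (simp_all add: mem_cells)
  have "card (row k (fst q) \<inter> Ls s n) = 1" using latin_rowc[OF s j(1) n] .
  moreover have "q \<in> row k (fst q)" using qc j e by (simp add: mem_row mem_cells)
  moreover have "q' \<in> row k (fst q)" using qc j e by (simp add: mem_row mem_cells)
  ultimately show ?thesis using card1_uniq[of "_ \<inter> Ls s n" q q'] q by blast
qed

lemma line_cases:
  "line S \<Longrightarrow> (\<exists>i\<in>{1..k}. S = row k i) \<or> (\<exists>s\<in>{1..k-1}. \<exists>n\<in>{1..k}. S = Ls s n)"
  unfolding line_def rows_set_def parts_set_def by blast

lemma line_row: "i \<in> {1..k} \<Longrightarrow> line (row k i)"
  unfolding line_def rows_set_def by blast

lemma line_part: "s \<in> {1..k-1} \<Longrightarrow> n \<in> {1..k} \<Longrightarrow> line (Ls s n)"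
  unfolding line_def parts_set_def by blast

lemma row_sub: "i \<in> {1..k} \<Longrightarrow> row k i \<subseteq> cells k"
  unfolding row_def cells_def by auto

lemma line_sub: "line S \<Longrightarrow> S \<subseteq> cells k"
  using line_cases row_sub part_sub by blast

lemma line_col: "line S \<Longrightarrow> j \<in> {1..k} \<Longrightarrow> \<exists>q\<in>S. snd q = j"
  using line_cases part_col unfolding row_def by fastforce

lemma line_col_uniq: 
  assumes "line S" "q \<in> S" "q' \<in> S" "snd q = snd q'" shows "q = q'"
  using line_cases[OF assms(1)]
proof (elim disjE bexE)
  fix i assume "S = row k i" then show ?thesis using assms unfolding row_def by (auto simp: prod_eq_iff)
next
  fix s n assume "s \<in> {1..k-1}" "n \<in> {1..k}" "S = Ls s n"
  then show ?thesis using part_col_uniq assms by blast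
qed

lemma two_lines:
  assumes S: "line S" and T: "line T" and p: "p \<in> S" "p \<in> T" and q: "q \<in> S" "q \<in> T"
    and pq: "p \<noteq> q"
  shows "S = T"
proof -
  have rp: "card (row k i \<inter> Ls s n) = 1" if "i \<in> {1..k}" "s \<in> {1..k-1}" "n \<in> {1..k}" for i s n
    using latin_rowc[OF that(2,1,3)] .
  from line_cases[OF S] line_cases[OF T] show ?thesis
  proof (elim disjE bexE)
    fix i i' assume a: "S = row k i" "T = row k i'"
    then have "i = i'" using p by (simp add: mem_row)
    then show ?thesis using a by simp
  next
    fix i s n assume a: "i \<in> {1..k}" "S = row k i" "s \<in> {1..k-1}" "n \<in> {1..k}" "T = Ls s n"
    have "p \<in> row k i \<inter> Ls s n" "q \<in> row k i \<inter> Ls s n" using a p q by simp_all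
    then have "p = q" using card1_uniq[OF rp[OF a(1,3,4)]] by blast
    then show ?thesis using pq by simp
  next
    fix i s n assume a: "i \<in> {1..k}" "T = row k i" "s \<in> {1..k-1}" "n \<in> {1..k}" "S = Ls s n"
    have "p \<in> row k i \<inter> Ls s n" "q \<in> row k i \<inter> Ls s n" using a p q by simp_all
    then have "p = q" using card1_uniq[OF rp[OF a(1,3,4)]] by blast
    then show ?thesis using pq by simp
  next
    fix s n t n' assume a: "s \<in> {1..k-1}" "n \<in> {1..k}" "S = Ls s n" "t \<in> {1..k-1}" "n' \<in> {1..k}" "T = Ls t n'"
    show ?thesis
    proof (cases "s = t")
      case True
      show ?thesis
      proof (cases "n = n'")
        case True
        then show ?thesis using a \<open>s = t\<close> by simp
      next
        case False
        have "p \<in> Ls s n \<inter> Ls s n'" using a p \<open>s = t\<close> by simp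
        then show ?thesis using part_disj[OF a(1,2,5) False] by simp
      qed
    next
      case False
      have c: "card (Ls s n \<inter> Ls t n') = 1" using orthc[OF a(1,4) False a(2,5)] .
      have "p \<in> Ls s n \<inter> Ls t n'" "q \<in> Ls s n \<inter> Ls t n'" using a p q by simp_all
      then have "p = q" using card1_uniq[OF c] by blast
      then show ?thesis using pq by simp
    qed
  qed
qed

lemma Cell_V: "Cell p \<in> V \<longleftrightarrow> p \<in> cells k"
  unfolding Gk_V_def by auto

lemma Blk_V: "Blk S \<in> V \<longleftrightarrow> line S"
  unfolding Gk_V_def line_def by auto

lemma adj_CB[simp]: "adj (Cell p) (Blk S) \<longleftrightarrow> p \<in> cells k \<and> line S \<and> p \<in> S"
  unfolding Gk_adj_def Cell_V Blk_V by auto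

lemma adj_BC[simp]: "adj (Blk S) (Cell p) \<longleftrightarrow> p \<in> cells k \<and> line S \<and> p \<in> S"
  unfolding Gk_adj_def Cell_V Blk_V by auto

lemma adj_CC[simp]: "\<not> adj (Cell p) (Cell q)"
  unfolding Gk_adj_def by auto

lemma adj_BB[simp]: "\<not> adj (Blk S) (Blk T)"
  unfolding Gk_adj_def by auto

lemma adj_sym: "adj u v \<Longrightarrow> adj v u"
  by (cases u; cases v; auto)

lemma adj_V: "adj u v \<Longrightarrow> u \<in> V \<and> v \<in> V"
  unfolding Gk_adj_def by auto

lemma adj_irr: "\<not> adj v v"
  by (cases v) auto

lemma no_tri: "adj r a \<Longrightarrow> adj r b \<Longrightarrow> \<not> adj a b"
  by (cases r; cases a; cases b; auto)

lemma no_adj2: "adj r a \<Longrightarrow> adj a x \<Longrightarrow> adj r b \<Longrightarrow> adj b y \<Longrightarrow> \<not> adj x y"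
  by (cases r; cases a; cases b; cases x; cases y; auto)

lemma G2:
  assumes "adj x a" "adj x b" "adj y a" "adj y b" "a \<noteq> b"
  shows "x = y"
  using assms
proof (cases x; cases y; cases a; cases b)
  fix p q S T assume "x = Cell p" "y = Cell q" "a = Blk S" "b = Blk T"
  then show ?thesis using assms two_lines[of S T p q] by auto
next
  fix p q S T assume "x = Blk S" "y = Blk T" "a = Cell p" "b = Cell q"
  then show ?thesis using assms two_lines[of S T p q] by auto
qed auto

end


lemma cover:
  assumes fin: "finite N" and mN: "m < card N"
    and u: "\<And>i a b. i < m \<Longrightarrow> a \<in> N \<Longrightarrow> b \<in> N \<Longrightarrow> cov i a \<Longrightarrow> cov i b \<Longrightarrow> a = b"
  shows "\<exists>w\<in>N. \<forall>i<m. \<not> cov i w"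
proof (rule ccontr)
  assume "\<not> ?thesis"
  then have sub: "N \<subseteq> (\<Union>i\<in>{..<m}. {w\<in>N. cov i w})" by blast
  have f2: "finite (\<Union>i\<in>{..<m}. {w\<in>N. cov i w})" using fin by simp
  have "card N \<le> card (\<Union>i\<in>{..<m}. {w\<in>N. cov i w})" using card_mono[OF f2 sub] .
  also have "\<dots> \<le> (\<Sum>i\<in>{..<m}. card {w\<in>N. cov i w})" by (rule card_UN_le) simp
  also have "\<dots> \<le> (\<Sum>i\<in>{..<m}. 1)"
  proof (rule sum_mono)
    fix i assume i: "i \<in> {..<m}"
    have fi: "finite {w\<in>N. cov i w}" using fin by simp
    have "\<forall>a1\<in>{w\<in>N. cov i w}. \<forall>a2\<in>{w\<in>N. cov i w}. a1 = a2" using u[of i] i by blast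
    then have "card {w\<in>N. cov i w} \<le> Suc 0" using card_le_Suc0_iff_eq[OF fi] by blast
    then show "card {w\<in>N. cov i w} \<le> 1" by simp
  qed
  finally show False using mN by simp
qed

context gk
begin

lemma deg:
  assumes v: "v \<in> V"
  shows "\<exists>N. N \<subseteq> {w. adj v w} \<and> finite N \<and> card N = k"
proof (cases v)
  case (Blk S)
  then have S: "line S" using v Blk_V by simp
  define q where "q j = (SOME q. q \<in> S \<and> snd q = j)" for j
  have q: "q j \<in> S \<and> snd (q j) = j" if "j \<in> {1..k}" for j
    unfolding q_def using someI_ex[of "\<lambda>q. q \<in> S \<and> snd q = j"] line_col[OF S that] by blast
  have inj: "inj_on (\<lambda>j. Cell (q j)) {1..k}"
    by (rule inj_onI) (metis q gvert.inject(1))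
  show ?thesis
  proof (intro exI conjI)
    show "(\<lambda>j. Cell (q j)) ` {1..k} \<subseteq> {w. adj v w}"
      using q line_sub[OF S] S Blk by (auto simp del: atLeastAtMost_iff) (meson atLeastAtMost_iff subsetD)
    show "card ((\<lambda>j. Cell (q j)) ` {1..k}) = k" using card_image[OF inj] by simp
  qed simp
next
  case (Cell p)
  then have p: "p \<in> cells k" using v Cell_V by simp
  define ns where "ns s = (SOME n. n \<in> {1..k} \<and> p \<in> Ls s n)" for s
  have ns: "ns s \<in> {1..k} \<and> p \<in> Ls s (ns s)" if "s \<in> {1..k-1}" for s
    unfolding ns_def using someI_ex[of "\<lambda>n. n \<in> {1..k} \<and> p \<in> Ls s n"] part_cover[OF that p] by blast
  have two: "\<exists>a b. a \<in> Ls s n \<and> b \<in> Ls s n \<and> a \<noteq> b" if sn: "s \<in> {1..k-1}" "n \<in> {1..k}" for s n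
  proof -
    have i12: "(1::nat) \<in> {1..k}" "(2::nat) \<in> {1..k}" using k2 by auto
    obtain a where a: "a \<in> Ls s n" "fst a = 1" using part_row[OF sn i12(1)] by blast
    obtain b where b: "b \<in> Ls s n" "fst b = 2" using part_row[OF sn i12(2)] by blast
    show ?thesis using a b by (intro exI[of _ a] exI[of _ b]) auto
  qed
  have inj: "inj_on (\<lambda>s. Blk (Ls s (ns s))) {1..k-1}"
  proof (rule inj_onI, rule ccontr)
    fix s t assume s: "s \<in> {1..k-1}" and t: "t \<in> {1..k-1}" and e: "Blk (Ls s (ns s)) = Blk (Ls t (ns t))"
      and st: "s \<noteq> t"
    have "card (Ls s (ns s) \<inter> Ls t (ns t)) = 1" using orthc[OF s t st] ns[OF s] ns[OF t] by blast
    then have c: "card (Ls s (ns s)) = 1" using e by simp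
    obtain a b where ab: "a \<in> Ls s (ns s)" "b \<in> Ls s (ns s)" "a \<noteq> b" using two[OF s conjunct1[OF ns[OF s]]] by blast
    show False using card1_uniq[OF c ab(1,2)] ab(3) by blast
  qed
  have notin: "Blk (row k (fst p)) \<notin> (\<lambda>s. Blk (Ls s (ns s))) ` {1..k-1}"
  proof
    assume "Blk (row k (fst p)) \<in> (\<lambda>s. Blk (Ls s (ns s))) ` {1..k-1}"
    then obtain s where s: "s \<in> {1..k-1}" and e: "row k (fst p) = Ls s (ns s)" by auto
    define i' where "i' = (if fst p = 1 then 2 else (1::nat))"
    have i': "i' \<in> {1..k}" "i' \<noteq> fst p" using k2 unfolding i'_def by auto
    obtain q where "q \<in> Ls s (ns s)" "fst q = i'" using part_row[OF s conjunct1[OF ns[OF s]] i'(1)] by auto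
    then have "q \<in> row k (fst p)" using e by simp
    then show False using \<open>fst q = i'\<close> i'(2) by (simp add: mem_row)
  qed
  have prow: "p \<in> row k (fst p)" "fst p \<in> {1..k}" using p unfolding row_def cells_def by (cases p; auto)+
  show ?thesis
  proof (intro exI conjI)
    show "insert (Blk (row k (fst p))) ((\<lambda>s. Blk (Ls s (ns s))) ` {1..k-1}) \<subseteq> {w. adj v w}"
      using Cell p prow line_row ns line_part by auto
    show "card (insert (Blk (row k (fst p))) ((\<lambda>s. Blk (Ls s (ns s))) ` {1..k-1})) = k"
      using card_image[OF inj] notin k2 by simp
  qed simp
qed

lemma finite_cells: "finite (cells k)" unfolding cells_def by simp

lemma finite_V: "finite V"
proof -
  have "rows_set k = row k ` {1..k}" unfolding rows_set_def by auto
  moreover have "parts_set k Ls = (\<lambda>(s,n). Ls s n) ` ({1..k-1} \<times> {1..k})" unfolding parts_set_def by force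
  ultimately show ?thesis unfolding Gk_V_def using finite_cells by simp
qed

subsection \<open>Classical game\<close>

definition rowcops :: "nat \<Rightarrow> gvert" where "rowcops i = Blk (row k (Suc i))"

lemma cell_split: "p \<in> cells k \<Longrightarrow> fst p \<in> {1..k} \<and> snd p \<in> {1..k} \<and> p \<in> row k (fst p)"
  unfolding cells_def row_def by (cases p) auto

definition prow :: "(nat \<times> nat) set \<Rightarrow> nat \<Rightarrow> nat \<times> nat" where
  "prow S i = (SOME q. q \<in> S \<and> fst q = i)"

lemma prow:
  assumes S: "S \<in> parts_set k Ls" and i: "i \<in> {1..k}"
  shows "prow S i \<in> S" "fst (prow S i) = i" "prow S i \<in> cells k" "prow S i \<in> row k i"
    "q \<in> S \<Longrightarrow> fst q = i \<Longrightarrow> q = prow S i"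
proof -
  obtain s n where sn: "s \<in> {1..k-1}" "n \<in> {1..k}" "S = Ls s n" using S unfolding parts_set_def by blast
  have "prow S i \<in> S \<and> fst (prow S i) = i" unfolding prow_def
    using someI_ex[of "\<lambda>q. q \<in> S \<and> fst q = i"] part_row[OF sn(1,2) i] sn(3) by blast
  then show a: "prow S i \<in> S" "fst (prow S i) = i" by auto
  show c: "prow S i \<in> cells k" using a part_sub[OF sn(1,2)] sn(3) by auto
  show "prow S i \<in> row k i" using cell_split[OF c] a by simp
  show "q \<in> S \<Longrightarrow> fst q = i \<Longrightarrow> q = prow S i" using part_row_uniq[OF sn(1,2)] sn(3) a by auto
qed

lemma part_line: "S \<in> parts_set k Ls \<Longrightarrow> line S" unfolding line_def by simp

lemma cl_upper: "\<forall>r\<in>V. cl_win adj k rowcops r"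
proof
  fix r assume r: "r \<in> V"
  show "cl_win adj k rowcops r"
  proof (cases r)
    case (Cell p)
    then have p: "p \<in> cells k" using r Cell_V by simp
    define a where "a = fst p"
    have a: "a \<in> {1..k}" "p \<in> row k a" using cell_split[OF p] a_def by auto
    show ?thesis
    proof (rule cl_win.catch)
      show "vstep adj k rowcops (rowcops(a - 1 := Cell p))"
        unfolding vstep_def rowcops_def using a p line_row by auto
      show "r \<in> occ k (rowcops(a - 1 := Cell p))" unfolding occ_def using a Cell
        by (auto intro!: image_eqI[of _ _ "a - 1"])
    qed
  next
    case (Blk S)
    then have S: "line S" using r Blk_V by simp
    show ?thesis
    proof (cases "S \<in> rows_set k")
      case True
      then obtain a where a: "a \<in> {1..k}" "S = row k a" unfolding rows_set_def by auto
      show ?thesis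
        by (rule cl_win.caught) (use a Blk in \<open>auto simp: occ_def rowcops_def intro!: image_eqI[of _ _ "a - 1"]\<close>)
    next
      case False
      then have SP: "S \<in> parts_set k Ls" using S unfolding line_def by simp
      define C' where "C' i = Cell (prow S (Suc i))" for i
      show ?thesis
      proof (rule cl_win.move)
        show "vstep adj k rowcops C'"
          unfolding vstep_def rowcops_def C'_def
        proof (intro allI impI disjI2)
          fix i assume "i < k" then have si: "Suc i \<in> {1..k}" by simp
          show "adj (Blk (row k (Suc i))) (Cell (prow S (Suc i)))" using prow(3,4)[OF SP si] line_row[OF si] by simp
        qed
        show "\<forall>r'. r' = r \<or> adj r r' \<longrightarrow> cl_win adj k C' r'"
        proof (intro allI impI)
          fix r' assume "r' = r \<or> adj r r'"
          then show "cl_win adj k C' r'"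
          proof
            assume "r' = r"
            show ?thesis
            proof (rule cl_win.catch)
              have i1: "(1::nat) \<in> {1..k}" using k2 by simp
              show "vstep adj k C' (C'(0 := Blk S))"
                unfolding vstep_def
              proof (intro allI impI)
                fix i assume "i < k"
                show "(C'(0 := Blk S)) i = C' i \<or> adj (C' i) ((C'(0 := Blk S)) i)"
                proof (cases "i = 0")
                  case True
                  then show ?thesis using prow(1,3)[OF SP i1] S unfolding C'_def by simp
                qed simp
              qed
              show "r' \<in> occ k (C'(0 := Blk S))" using \<open>r' = r\<close> Blk k2 unfolding occ_def
                by (auto intro!: image_eqI[of _ _ 0])
            qed
          next
            assume "adj r r'"
            then obtain q where q: "r' = Cell q" "q \<in> S" "q \<in> cells k" using Blk by (cases r') auto
            have "fst q \<in> {1..k}" using cell_split[OF q(3)] by simp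
            then have "q = prow S (Suc (fst q - 1))" using prow(5)[OF SP _ q(2)] by simp
            then show ?thesis using q \<open>fst q \<in> {1..k}\<close>
              by (intro cl_win.caught) (auto simp: occ_def C'_def intro!: image_eqI[of _ _ "fst q - 1"])
          qed
        qed
      qed
    qed
  qed
qed

lemma rowcops_V: "\<forall>i<k. rowcops i \<in> V"
  unfolding rowcops_def Blk_V using line_row by auto

lemma cl_inv:
  assumes "cl_win adj m C r"
  shows "m < k \<Longrightarrow> r \<in> V \<Longrightarrow> (\<forall>i<m. C i \<noteq> r \<and> \<not> adj (C i) r) \<Longrightarrow> False"
  using assms
proof (induction rule: cl_win.induct)
  case (caught r C)
  then show ?case unfolding occ_def by auto
next
  case (catch C C' r)
  then obtain i where i: "i < m" "C' i = r" unfolding occ_def by auto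
  then have "C' i = C i \<or> adj (C i) (C' i)" using catch.hyps(1) unfolding vstep_def by blast
  then show ?case using catch.prems(3) i by auto
next
  case (move C C' r)
  have ne: "C' i \<noteq> r" if "i < m" for i
    using move.hyps(1) move.prems(3) that unfolding vstep_def by metis
  obtain N where N: "N \<subseteq> {w. adj r w}" "finite N" "card N = k" using deg[OF move.prems(2)] by blast
  have "\<exists>w\<in>N. \<forall>i<m. \<not> (C' i = w \<or> adj (C' i) w)"
  proof (rule cover)
    show "finite N" "m < card N" using N move.prems by auto
    fix i a b assume i: "i < m" and ab: "a \<in> N" "b \<in> N" "C' i = a \<or> adj (C' i) a" "C' i = b \<or> adj (C' i) b"
    have ra: "adj r a" "adj r b" using ab N by auto
    show "a = b"
    proof (rule ccontr)
      assume "a \<noteq> b"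
      then show False using ab(3,4) no_tri[OF ra] no_tri[OF ra(2,1)] G2[of "C' i" a b r] ra ne[OF i] adj_sym
        by metis
    qed
  qed
  then obtain w where w: "w \<in> N" "\<forall>i<m. \<not> (C' i = w \<or> adj (C' i) w)" by blast
  have rw: "adj r w" using w N by auto
  show False using move.IH[rule_format, of w] rw w(2) move.prems(1) adj_V[OF rw] by blast
qed

lemma cl_lower:
  assumes m: "m < k" and C: "\<forall>i<m. C i \<in> V"
  shows "\<exists>r\<in>V. \<not> cl_win adj m C r"
proof -
  define N where "N = (\<lambda>i. Cell (i, 1)) ` {1..k}"
  have NV: "N \<subseteq> V" using k2 by (auto simp: N_def Cell_V cells_def)
  have cN: "card N = k" unfolding N_def by (subst card_image) (auto intro: inj_onI)
  have "\<exists>w\<in>N. \<forall>i<m. \<not> (C i = w \<or> adj (C i) w)"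
  proof (rule cover)
    show "finite N" "m < card N" using cN m by (auto simp: N_def)
    fix i a b assume i: "i < m" and ab: "a \<in> N" "b \<in> N" "C i = a \<or> adj (C i) a" "C i = b \<or> adj (C i) b"
    obtain a' b' where a': "a = Cell (a', 1)" "b = Cell (b', 1)" using ab unfolding N_def by auto
    show "a = b"
    proof (cases "C i")
      case (Cell x)
      then show ?thesis using ab(3,4) a' by auto
    next
      case (Blk S)
      then have "(a',1) \<in> S" "(b',1) \<in> S" "line S" using ab(3,4) a' by auto
      then show ?thesis using line_col_uniq[of S "(a',1)" "(b',1)"] a' by auto
    qed
  qed
  then obtain w where w: "w \<in> N" "\<forall>i<m. \<not> (C i = w \<or> adj (C i) w)" by blast
  then show ?thesis using cl_inv[of m C w] m NV by blast
qed

lemma cop_number_eq: "cop_number V adj = k"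
  unfolding cop_number_def
proof (rule Least_equality)
  show "\<exists>C. (\<forall>i<k. C i \<in> V) \<and> (\<forall>r\<in>V. cl_win adj k C r)"
    using rowcops_V cl_upper by blast
  fix m assume "\<exists>C. (\<forall>i<m. C i \<in> V) \<and> (\<forall>r\<in>V. cl_win adj m C r)"
  then show "k \<le> m" using cl_lower by (meson not_le)
qed

end


context gk
begin

definition cf :: "gvert \<Rightarrow> nat \<Rightarrow> gvert" where
  "cf X i = (if i < k then Blk (row k (Suc i)) else X)"

lemma cf_step: "X' = X \<or> adj X X' \<Longrightarrow> vstep adj (k+1) (cf X) (cf X')"
  unfolding vstep_def cf_def by auto

lemma cf_row: "a \<in> {1..k} \<Longrightarrow> Blk (row k a) \<in> occ (k+1) (cf X)"
  unfolding occ_def cf_def by (auto intro!: image_eqI[of _ _ "a - 1"])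

lemma cf_X: "X \<in> occ (k+1) (cf X)"
  unfolding occ_def cf_def by (auto intro!: image_eqI[of _ _ k])

lemma rvA:
  assumes SP: "S \<in> parts_set k Ls"
  shows "rv_win adj (k+1) (cf X) (Blk S)"
proof -
  define C' where "C' i = (if i < k then Cell (prow S (Suc i)) else X)" for i
  show ?thesis
  proof (rule rv_win.surround)
    show "vstep adj (k+1) (cf X) C'"
      unfolding vstep_def cf_def C'_def
    proof (intro allI impI)
      fix i assume "i < k + 1"
      show "(if i < k then Cell (prow S (Suc i)) else X) = (if i < k then Blk (row k (Suc i)) else X) \<or>
          adj (if i < k then Blk (row k (Suc i)) else X) (if i < k then Cell (prow S (Suc i)) else X)"
      proof (cases "i < k")
        case True then have si: "Suc i \<in> {1..k}" by simp
        show ?thesis using True prow(3,4)[OF SP si] line_row[OF si] by simp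
      qed simp
    qed
    show "{v. adj (Blk S) v} \<subseteq> occ (k+1) C'"
    proof
      fix v assume "v \<in> {v. adj (Blk S) v}"
      then obtain q where q: "v = Cell q" "q \<in> S" "q \<in> cells k" by (cases v) auto
      have "fst q \<in> {1..k}" using cell_split[OF q(3)] by simp
      then have "q = prow S (Suc (fst q - 1))" using prow(5)[OF SP _ q(2)] by simp
      then show "v \<in> occ (k+1) C'" using q \<open>fst q \<in> {1..k}\<close>
        by (auto simp: occ_def C'_def intro!: image_eqI[of _ _ "fst q - 1"])
    qed
  qed
qed

lemma rv_nbr:
  assumes "adj (Cell p) r'" "r' \<notin> occ (k+1) (cf X')"
  shows "rv_win adj (k+1) (cf X') r'"
proof -
  obtain S where S: "r' = Blk S" "line S" using assms(1) by (cases r') auto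
  have "S \<notin> rows_set k" using assms(2) cf_row S unfolding rows_set_def by auto
  then show ?thesis using S rvA unfolding line_def by auto
qed

lemma rvB:
  assumes p: "p \<in> cells k" and X: "X = Cell p \<or> adj X (Cell p)"
  shows "rv_win adj (k+1) (cf X) (Cell p)"
proof (rule rv_win.move)
  show "vstep adj (k+1) (cf X) (cf (Cell p))" using X cf_step by auto
  show "\<forall>r'. (r' = Cell p \<or> adj (Cell p) r') \<and> r' \<notin> occ (k + 1) (cf (Cell p)) \<longrightarrow>
      rv_win adj (k + 1) (cf (Cell p)) r'"
    using cf_X rv_nbr by blast
qed

lemma rvC:
  assumes p: "p \<in> cells k" and S: "line S" "p \<in> S" "q \<in> S" "q \<in> cells k"
  shows "rv_win adj (k+1) (cf (Cell q)) (Cell p)"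
proof (rule rv_win.move)
  show "vstep adj (k+1) (cf (Cell q)) (cf (Blk S))" using S cf_step by auto
  show "\<forall>r'. (r' = Cell p \<or> adj (Cell p) r') \<and> r' \<notin> occ (k + 1) (cf (Blk S)) \<longrightarrow>
      rv_win adj (k + 1) (cf (Blk S)) r'"
  proof (intro allI impI)
    fix r' assume h: "(r' = Cell p \<or> adj (Cell p) r') \<and> r' \<notin> occ (k + 1) (cf (Blk S))"
    have "adj (Blk S) (Cell p)" using S p by simp
    then show "rv_win adj (k + 1) (cf (Blk S)) r'" using h rv_nbr[of p r' "Blk S"] rvB[OF p, of "Blk S"] by blast
  qed
qed

lemma rvD:
  assumes p: "p \<in> cells k" and S: "line S" "p \<in> S" "q \<in> S" "q \<in> cells k"
    and T: "line T" "q \<in> T"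
  shows "rv_win adj (k+1) (cf (Blk T)) (Cell p)"
proof (rule rv_win.move)
  show "vstep adj (k+1) (cf (Blk T)) (cf (Cell q))" using S T cf_step by auto
  show "\<forall>r'. (r' = Cell p \<or> adj (Cell p) r') \<and> r' \<notin> occ (k + 1) (cf (Cell q)) \<longrightarrow>
      rv_win adj (k + 1) (cf (Cell q)) r'"
  proof (intro allI impI)
    fix r' assume h: "(r' = Cell p \<or> adj (Cell p) r') \<and> r' \<notin> occ (k + 1) (cf (Cell q))"
    then show "rv_win adj (k + 1) (cf (Cell q)) r'" using rv_nbr[of p r' "Cell q"] rvC[OF p S] by blast
  qed
qed

lemma rv_upper: "rv_cop_number V adj \<le> k + 1"
  unfolding rv_cop_number_def
proof (rule Least_le, intro exI conjI)
  let ?X = "Blk (row k 1)"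
  have r1: "line (row k 1)" using line_row k2 by simp
  show "\<forall>i<k+1. cf ?X i \<in> V" using line_row r1 by (auto simp: cf_def Blk_V)
  show "\<forall>r\<in>V. r \<notin> occ (k + 1) (cf ?X) \<longrightarrow> rv_win adj (k + 1) (cf ?X) r"
  proof (intro ballI impI)
    fix r assume r: "r \<in> V" and ro: "r \<notin> occ (k + 1) (cf ?X)"
    show "rv_win adj (k + 1) (cf ?X) r"
    proof (cases r)
      case (Blk S)
      then have S: "line S" using r Blk_V by simp
      have "S \<notin> rows_set k" using ro cf_row Blk unfolding rows_set_def by auto
      then show ?thesis using S rvA Blk unfolding line_def by auto
    next
      case (Cell p)
      then have p: "p \<in> cells k" using r Cell_V by simp
      show ?thesis
      proof (cases "fst p = 1")
        case True
        then have "p \<in> row k 1" using cell_split[OF p] by simp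
        then show ?thesis using rvB[OF p, of ?X] Cell p r1 by auto
      next
        case False
        have s1: "(1::nat) \<in> {1..k-1}" using k2 by auto
        obtain n where n: "n \<in> {1..k}" "p \<in> Ls 1 n" using part_cover[OF s1 p] by blast
        have SP: "Ls 1 n \<in> parts_set k Ls" unfolding parts_set_def using s1 n by blast
        have i1: "(1::nat) \<in> {1..k}" using k2 by auto
        show ?thesis using rvD[OF p part_line[OF SP] n(2) prow(1)[OF SP i1] prow(3)[OF SP i1] r1 prow(4)[OF SP i1]] Cell
          by simp
      qed
    qed
  qed
qed

subsection \<open>Edge game\<close>

lemma edge_key:
  assumes m: "m < k * (k - 1)" and E: "\<forall>i<m. C i \<in> edges adj" and r: "r \<in> V"
  shows "\<exists>w. adj r w \<and> \<not> (\<exists>C''. estep adj m C C'' \<and> incident adj w \<subseteq> occ m C'')"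
proof -
  obtain N where N: "N \<subseteq> {w. adj r w}" "finite N" "card N = k" using deg[OF r] by blast
  define A where "A w = insert w ({x. adj w x} - {r})" for w
  define I where "I w = {i. i < m \<and> C i \<inter> A w \<noteq> {}}" for w
  have sep: "x \<noteq> y \<and> \<not> adj x y"
    if w: "adj r w1" "adj r w2" "w1 \<noteq> w2" and xy: "x \<in> A w1" "y \<in> A w2" for w1 w2 x y
  proof -
    have "x \<noteq> y"
      using xy unfolding A_def
      using no_tri[OF w(1,2)] no_tri[OF w(2,1)] G2[of x w1 w2 r] adj_sym w by auto
    moreover have "\<not> adj x y"
    proof
      assume xy': "adj x y"
      have xc: "x = w1 \<or> (adj w1 x \<and> x \<noteq> r)" using xy(1) unfolding A_def by blast
      have yc: "y = w2 \<or> (adj w2 y \<and> y \<noteq> r)" using xy(2) unfolding A_def by blast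
      from xc yc show False
      proof (elim disjE conjE)
        assume "x = w1" "y = w2" then show False using no_tri[OF w(1,2)] xy' by simp
      next
        assume h: "x = w1" "adj w2 y" "y \<noteq> r"
        have "y = r" using G2[of y w1 w2 r] adj_sym[OF xy'] h adj_sym[OF h(2)] w by simp
        then show False using h by simp
      next
        assume h: "adj w1 x" "x \<noteq> r" "y = w2"
        have "x = r" using G2[of x w1 w2 r] xy' h adj_sym[OF h(1)] w by simp
        then show False using h by simp
      next
        assume h: "adj w1 x" "x \<noteq> r" "adj w2 y" "y \<noteq> r"
        show False using no_adj2[OF w(1) h(1) w(2) h(3)] xy' by simp
      qed
    qed
    ultimately show ?thesis by blast
  qed
  have disj: "I w1 \<inter> I w2 = {}" if w: "w1 \<in> N" "w2 \<in> N" "w1 \<noteq> w2" for w1 w2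
  proof (rule ccontr)
    assume "I w1 \<inter> I w2 \<noteq> {}"
    then obtain i where i: "i < m" "C i \<inter> A w1 \<noteq> {}" "C i \<inter> A w2 \<noteq> {}" unfolding I_def by auto
    obtain a b where ab: "C i = {a, b}" "adj a b" using E i(1) unfolding edges_def by auto
    obtain x where x: "x \<in> {a,b}" "x \<in> A w1" using i(2) ab by auto
    obtain y where y: "y \<in> {a,b}" "y \<in> A w2" using i(3) ab by auto
    have "x \<noteq> y \<and> \<not> adj x y" using sep[OF _ _ w(3) x(2) y(2)] w N by auto
    then show False using x(1) y(1) ab(2) adj_sym by auto
  qed
  have finI: "finite (I w)" for w unfolding I_def by simp
  have "(\<Sum>w\<in>N. card (I w)) = card (\<Union>w\<in>N. I w)"
    by (rule card_UN_disjoint[symmetric]) (use N finI disj in auto)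
  also have "\<dots> \<le> card {..<m}" by (rule card_mono) (auto simp: I_def)
  finally have sumle: "(\<Sum>w\<in>N. card (I w)) \<le> m" by simp
  have "\<exists>w\<in>N. card (I w) < k - 1"
  proof (rule ccontr)
    assume "\<not> ?thesis"
    then have "of_nat (card N) * (k - 1) \<le> (\<Sum>w\<in>N. card (I w))"
      by (intro sum_bounded_below) auto
    then show False using sumle m N by simp
  qed
  then obtain w where w: "w \<in> N" "card (I w) < k - 1" by blast
  have rw: "adj r w" using w N by auto
  show ?thesis
  proof (intro exI conjI notI)
    show "adj r w" by fact
    assume "\<exists>C''. estep adj m C C'' \<and> incident adj w \<subseteq> occ m C''"
    then obtain C'' where st: "estep adj m C C''" and inc: "incident adj w \<subseteq> occ m C''" by blast
    obtain Nw where Nw: "Nw \<subseteq> {x. adj w x}" "finite Nw" "card Nw = k" using deg adj_V[OF rw] by blast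
    define X where "X = Nw - {r}"
    have cX: "k - 1 \<le> card X" unfolding X_def using Nw by (simp add: card_Diff_singleton_if)
    have ex: "\<exists>i. i < m \<and> C'' i = {w, x}" if "x \<in> X" for x
    proof -
      have "{w, x} \<in> incident adj w" using that Nw unfolding X_def incident_def edges_def by auto
      then have "{w, x} \<in> C'' ` {..<m}" using inc unfolding occ_def by blast
      then obtain i where "i < m" "{w, x} = C'' i" by blast
      then show ?thesis by metis
    qed
    define g where "g x = (SOME i. i < m \<and> C'' i = {w, x})" for x
    have g: "g x < m \<and> C'' (g x) = {w, x}" if "x \<in> X" for x
      unfolding g_def using someI_ex[OF ex[OF that]] .
    have xw: "x \<noteq> w" if "x \<in> X" for x using that Nw adj_irr unfolding X_def by auto
    have inj: "inj_on g X"
    proof (rule inj_onI)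
      fix x x' assume "x \<in> X" "x' \<in> X" "g x = g x'"
      then have "{w, x} = {w, x'}" using g by metis
      then show "x = x'" using xw \<open>x \<in> X\<close> \<open>x' \<in> X\<close> by (auto simp: doubleton_eq_iff)
    qed
    have sub: "g ` X \<subseteq> I w"
    proof
      fix i assume "i \<in> g ` X"
      then obtain x where x: "x \<in> X" "i = g x" by blast
      have xA: "x \<in> A w" "w \<in> A w" using x Nw unfolding A_def X_def by auto
      have "C'' i = C i \<or> C i \<inter> C'' i \<noteq> {}" using st g[OF x(1)] x(2) unfolding estep_def by blast
      then have "C i \<inter> A w \<noteq> {}" using g[OF x(1)] x(2) xA by auto
      then show "i \<in> I w" using g[OF x(1)] x(2) unfolding I_def by auto
    qed
    have "card X \<le> card (I w)" by (rule card_inj_on_le[OF inj sub finI])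
    then show False using cX w(2) by simp
  qed
qed

lemma ed_inv:
  assumes "ed_win adj m C r"
  shows "m < k * (k - 1) \<Longrightarrow> r \<in> V \<Longrightarrow> (\<forall>i<m. C i \<in> edges adj) \<Longrightarrow>
     \<not> (\<exists>C''. estep adj m C C'' \<and> incident adj r \<subseteq> occ m C'') \<Longrightarrow> False"
  using assms
proof (induction rule: ed_win.induct)
  case (surrounded r C)
  have "estep adj m C C" unfolding estep_def by simp
  then show ?case using surrounded by blast
next
  case (surround C C' r)
  then show ?case by blast
next
  case (move C C' r)
  have E': "\<forall>i<m. C' i \<in> edges adj" using move.hyps(1) move.prems(3) unfolding estep_def by metis
  obtain w where w: "adj r w" "\<not> (\<exists>C''. estep adj m C' C'' \<and> incident adj w \<subseteq> occ m C'')"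
    using edge_key[OF move.prems(1) E' move.prems(2)] by blast
  show False using move.IH[rule_format, of w] w move.prems(1) adj_V[OF w(1)] E' by blast
qed

lemma edge_lower: "k * (k - 1) \<le> edge_cop_number V adj"
proof -
  let ?P = "\<lambda>m. \<exists>C. (\<forall>i<m. C i \<in> edges adj) \<and> (\<forall>r\<in>V. ed_win adj m C r)"
  have "finite (edges adj)"
  proof -
    have "edges adj \<subseteq> (\<lambda>(u, v). {u, v}) ` (V \<times> V)" unfolding edges_def using adj_V by fastforce
    then show ?thesis using finite_V by (meson finite_SigmaI finite_imageI finite_subset)
  qed
  then have "\<exists>n (f :: nat \<Rightarrow> gvert set). edges adj = f ` {i. i < n}" by (simp only: finite_conv_nat_seg_image)
  then obtain n and f :: "nat \<Rightarrow> gvert set" where nf: "edges adj = f ` {i. i < n}" by (elim exE)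
  have "?P n"
  proof (intro exI conjI ballI allI impI)
    show "\<And>i. i < n \<Longrightarrow> f i \<in> edges adj" using nf by auto
    fix r assume "r \<in> V"
    show "ed_win adj n f r"
      by (rule ed_win.surrounded) (auto simp: incident_def occ_def nf lessThan_def)
  qed
  then have PL: "?P (LEAST m. ?P m)" by (rule LeastI)
  have c: "(1, 1) \<in> cells k" unfolding cells_def using k2 by auto
  have "\<not> ?P m" if m: "m < k * (k - 1)" for m
  proof
    assume "?P m"
    then obtain C where C: "\<forall>i<m. C i \<in> edges adj" "\<forall>r\<in>V. ed_win adj m C r" by blast
    obtain w where w: "adj (Cell (1,1)) w" "\<not> (\<exists>C''. estep adj m C C'' \<and> incident adj w \<subseteq> occ m C'')"
      using edge_key[OF m C(1)] c Cell_V by blast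
    show False using ed_inv[OF C(2)[rule_format, of w] m _ C(1) w(2)] adj_V[OF w(1)] by blast
  qed
  then show ?thesis unfolding edge_cop_number_def using PL by (meson not_le)
qed

end

theorem lemma3:
  fixes k :: nat and Ls :: "nat \<Rightarrow> nat \<Rightarrow> (nat \<times> nat) set"
  assumes "\<exists>p e. prime p \<and> e \<ge> 1 \<and> k = p ^ e"
    and "MOLS k Ls"
  shows "cop_number (Gk_V k Ls) (Gk_adj k Ls) = k \<and>
         rv_cop_number (Gk_V k Ls) (Gk_adj k Ls) \<le> k + 1 \<and>
         edge_cop_number (Gk_V k Ls) (Gk_adj k Ls) \<ge> k * (k - 1)"
proof -
  obtain p e where pe: "prime p" "e \<ge> 1" "k = p ^ e" using assms(1) by blast
  have "2 \<le> p" using prime_ge_2_nat pe(1) by blast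
  moreover have "p \<le> p ^ e" using self_le_power[of p e] pe \<open>2 \<le> p\<close> by simp
  ultimately have k2: "2 \<le> k" using pe by simp
  interpret gk k Ls using assms(2) k2 by unfold_locales
  show ?thesis using cop_number_eq rv_upper edge_lower by blast
qed

end
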